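(* Let $F$ be a recurrent set and let $X\subset F$ be a bifix code of finite $F$-degree $d$. Then the set of nonempty proper suffixes of words of $X$ is a disjoint union of $d-1$ $F$-maximal prefix codes.
   Context: $A$ is a finite alphabet. $F\subset A^*$ is recurrent if it is nonempty, closed under factors, and for all $u,w\in F$ there is $v\in F$ with $uvw\in F$. A prefix code is a set of nonempty words none of which is a proper prefix of another; a bifix code is also suffix (no element a proper suffix of another). A prefix code $Y\subset F$ is $F$-maximal if it is not properly contained in any prefix code contained in $F$. A parse of $w$ with respect to $X$ is a triple $(v,x,u)$ with $w=vxu$, $v$ having no suffix in $X$, $x\in X^*$, $u$ having no prefix in $X$; $\delta_X(w)$ is their number and $d_F(X)=\max_{w\in F}\delta_X(w)$. *)

theory Defs
  imports Main "HOL-Library.Sublist"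
begin

definition factorial_set :: "'a list set \<Rightarrow> bool" where
  "factorial_set F \<longleftrightarrow> (\<forall>w\<in>F. \<forall>u. sublist u w \<longrightarrow> u \<in> F)"

definition recurrent :: "'a list set \<Rightarrow> bool" where
  "recurrent F \<longleftrightarrow> F \<noteq> {} \<and> factorial_set F \<and>
     (\<forall>u\<in>F. \<forall>w\<in>F. \<exists>v\<in>F. u @ v @ w \<in> F)"

definition prefix_code :: "'a list set \<Rightarrow> bool" where
  "prefix_code X \<longleftrightarrow> [] \<notin> X \<and> (\<forall>x\<in>X. \<forall>y\<in>X. \<not> strict_prefix x y)"

definition suffix_code :: "'a list set \<Rightarrow> bool" where
  "suffix_code X \<longleftrightarrow> [] \<notin> X \<and> (\<forall>x\<in>X. \<forall>y\<in>X. \<not> strict_suffix x y)"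

definition bifix_code :: "'a list set \<Rightarrow> bool" where
  "bifix_code X \<longleftrightarrow> prefix_code X \<and> suffix_code X"

definition F_maximal_prefix_code :: "'a list set \<Rightarrow> 'a list set \<Rightarrow> bool" where
  "F_maximal_prefix_code F Y \<longleftrightarrow> prefix_code Y \<and> Y \<subseteq> F \<and>
     \<not> (\<exists>Z. prefix_code Z \<and> Z \<subseteq> F \<and> Y \<subset> Z)"

definition star_set :: "'a list set \<Rightarrow> 'a list set" where
  "star_set X = {concat xs | xs. set xs \<subseteq> X}"

definition parses :: "'a list set \<Rightarrow> 'a list \<Rightarrow> ('a list \<times> 'a list \<times> 'a list) set" where
  "parses X w = {(v, x, u). w = v @ x @ u \<and> (\<forall>s. suffix s v \<longrightarrow> s \<notin> X)
      \<and> x \<in> star_set X \<and> (\<forall>p. prefix p u \<longrightarrow> p \<notin> X)}"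

definition delta :: "'a list set \<Rightarrow> 'a list \<Rightarrow> nat" where
  "delta X w = card (parses X w)"

definition has_F_degree :: "'a list set \<Rightarrow> 'a list set \<Rightarrow> nat \<Rightarrow> bool" where
  "has_F_degree F X d \<longleftrightarrow> (\<forall>w\<in>F. delta X w \<le> d) \<and> (\<exists>w\<in>F. delta X w = d)"

end

theory Submission imports Defs begin

definition Pc :: "'a list set \<Rightarrow> 'a list \<Rightarrow> 'a list set" where
  "Pc X w = {v. prefix v w \<and> (\<forall>s. suffix s v \<longrightarrow> s \<notin> X)}"
definition Qc :: "'a list set \<Rightarrow> 'a list \<Rightarrow> 'a list set" where
  "Qc X w = {u. suffix u w \<and> (\<forall>p. prefix p u \<longrightarrow> p \<notin> X)}"

lemma finite_Pc: "finite (Pc X w)"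
proof -
  have "Pc X w \<subseteq> set (prefixes w)" by (auto simp: Pc_def)
  thus ?thesis by (rule finite_subset) simp
qed

lemma finite_Qc: "finite (Qc X w)"
proof -
  have "Qc X w \<subseteq> set (suffixes w)" by (auto simp: Qc_def)
  thus ?thesis by (rule finite_subset) simp
qed

lemma uniqU:
  assumes pc: "prefix_code X"
  shows "set xs1 \<subseteq> X \<Longrightarrow> set xs2 \<subseteq> X \<Longrightarrow> concat xs1 @ u1 = concat xs2 @ u2
   \<Longrightarrow> (\<forall>p. prefix p u1 \<longrightarrow> p \<notin> X) \<Longrightarrow> (\<forall>p. prefix p u2 \<longrightarrow> p \<notin> X)
   \<Longrightarrow> concat xs1 = concat xs2"
proof (induction xs1 arbitrary: xs2)
  case Nil
  show ?case
  proof (cases xs2)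
    case Nil then show ?thesis by simp
  next
    case (Cons z zs)
    then have "prefix z u1" using Nil.prems(3) by simp
    moreover have "z \<in> X" using Nil.prems(2) Cons by simp
    ultimately show ?thesis using Nil.prems(4) by blast
  qed
next
  case (Cons z zs)
  show ?case
  proof (cases xs2)
    case Nil
    then have "u2 = z @ (concat zs @ u1)" using Cons.prems(3) by simp
    then have "prefix z u2" by (rule prefixI)
    moreover have "z \<in> X" using Cons.prems(1) by simp
    ultimately show ?thesis using Cons.prems(5) by blast
  next
    case (Cons z' zs')
    have zX: "z \<in> X" "z' \<in> X" using Cons.prems(1,2) Cons by auto
    have eq: "z @ (concat zs @ u1) = z' @ (concat zs' @ u2)" using Cons.prems(3) Cons by simp
    have "prefix z (z' @ (concat zs' @ u2))" "prefix z' (z' @ (concat zs' @ u2))"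
      using eq by (metis prefixI)+
    then have "prefix z z' \<or> prefix z' z" using prefix_same_cases by blast
    then have "z = z'" using zX pc unfolding prefix_code_def
      by (metis prefix_order.le_less)
    then have "concat zs @ u1 = concat zs' @ u2" using eq by simp
    then have "concat zs = concat zs'" using Cons.IH[of zs'] Cons.prems Cons by auto
    then show ?thesis using \<open>z = z'\<close> Cons by simp
  qed
qed

lemma existsE:
  assumes "[] \<notin> X"
  shows "\<exists>xs u. set xs \<subseteq> X \<and> y = concat xs @ u \<and> (\<forall>p. prefix p u \<longrightarrow> p \<notin> X)"
proof (induction y rule: length_induct)
  case (1 y)
  show ?case
  proof (cases "\<forall>p. prefix p y \<longrightarrow> p \<notin> X")
    case True
    then show ?thesis by (intro exI[of _ "[]"] exI[of _ y]) simp
  next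
    case False
    then obtain p where p: "prefix p y" "p \<in> X" by blast
    then obtain y' where y: "y = p @ y'" by (auto simp: prefix_def)
    have "p \<noteq> []" using p assms by auto
    then have "length y' < length y" using y by simp
    then obtain xs u where "set xs \<subseteq> X" "y' = concat xs @ u" "\<forall>p. prefix p u \<longrightarrow> p \<notin> X"
      using 1 by blast
    then show ?thesis using y p by (intro exI[of _ "p # xs"] exI[of _ u]) simp
  qed
qed

lemma delta_Pc:
  assumes pc: "prefix_code X"
  shows "delta X w = card (Pc X w)"
proof -
  have inj: "inj_on fst (parses X w)"
  proof (rule inj_onI)
    fix a b assume a: "a \<in> parses X w" and b: "b \<in> parses X w" and f: "fst a = fst b"
    obtain v x u where av: "a = (v, x, u)" by (cases a) auto
    obtain v' x' u' where bv: "b = (v', x', u')" by (cases b) auto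
    have "v = v'" using f av bv by simp
    from a av obtain xs where xs: "x = concat xs" "set xs \<subseteq> X" and
      wa: "w = v @ x @ u" and ua: "\<forall>p. prefix p u \<longrightarrow> p \<notin> X"
      by (auto simp: parses_def star_set_def)
    from b bv obtain xs' where xs': "x' = concat xs'" "set xs' \<subseteq> X" and
      wb: "w = v' @ x' @ u'" and ub: "\<forall>p. prefix p u' \<longrightarrow> p \<notin> X"
      by (auto simp: parses_def star_set_def)
    have e: "x @ u = x' @ u'" using wa wb \<open>v = v'\<close> by simp
    have "x = x'" using uniqU[OF pc xs(2) xs'(2)] e xs xs' ua ub by simp
    then show "a = b" using e av bv \<open>v = v'\<close> by simp
  qed
  have img: "fst ` parses X w = Pc X w"
  proof
    show "fst ` parses X w \<subseteq> Pc X w"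
      by (auto simp: parses_def Pc_def)
  next
    show "Pc X w \<subseteq> fst ` parses X w"
    proof
      fix v assume "v \<in> Pc X w"
      then have v: "prefix v w" "\<forall>s. suffix s v \<longrightarrow> s \<notin> X" by (auto simp: Pc_def)
      then obtain y where y: "w = v @ y" by (auto simp: prefix_def)
      have "[] \<notin> X" using pc by (simp add: prefix_code_def)
      from existsE[OF this, of y] obtain xs u where
        "set xs \<subseteq> X" "y = concat xs @ u" "\<forall>p. prefix p u \<longrightarrow> p \<notin> X" by blast
      then have "(v, concat xs, u) \<in> parses X w"
        using y v by (auto simp: parses_def star_set_def)
      then show "v \<in> fst ` parses X w" by force
    qed
  qed
  show ?thesis unfolding delta_def using card_image[OF inj] img by simp
qed


lemma prefix_code_rev: "suffix_code X \<Longrightarrow> prefix_code (rev ` X)"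
  unfolding suffix_code_def prefix_code_def
  by (auto simp: strict_suffix_to_prefix)

lemma nopre_rev: "(\<forall>s. suffix s v \<longrightarrow> s \<notin> X) \<Longrightarrow> (\<forall>p. prefix p (rev v) \<longrightarrow> p \<notin> rev ` X)"
  by (auto simp: suffix_to_prefix)

lemma nosuf_rev: "(\<forall>p. prefix p (rev u) \<longrightarrow> p \<notin> rev ` X) \<Longrightarrow> (\<forall>s. suffix s u \<longrightarrow> s \<notin> X)"
  by (auto simp: suffix_to_prefix)

lemma uniqU':
  assumes sc: "suffix_code X" and "set xs1 \<subseteq> X" "set xs2 \<subseteq> X"
    and e: "v1 @ concat xs1 = v2 @ concat xs2"
    and n1: "\<forall>s. suffix s v1 \<longrightarrow> s \<notin> X" and n2: "\<forall>s. suffix s v2 \<longrightarrow> s \<notin> X"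
  shows "concat xs1 = concat xs2"
proof -
  have s1: "set (map rev (rev xs1)) \<subseteq> rev ` X" using assms(2) by auto
  have s2: "set (map rev (rev xs2)) \<subseteq> rev ` X" using assms(3) by auto
  have "rev (v1 @ concat xs1) = rev (v2 @ concat xs2)" using e by simp
  then have "concat (map rev (rev xs1)) @ rev v1 = concat (map rev (rev xs2)) @ rev v2"
    by (simp add: rev_concat)
  from uniqU[OF prefix_code_rev[OF sc] s1 s2 this nopre_rev[OF n1] nopre_rev[OF n2]]
  have "rev (concat xs1) = rev (concat xs2)" by (simp add: rev_concat)
  then show ?thesis by simp
qed

lemma existsE':
  assumes "[] \<notin> X"
  shows "\<exists>xs v. set xs \<subseteq> X \<and> y = v @ concat xs \<and> (\<forall>s. suffix s v \<longrightarrow> s \<notin> X)"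
proof -
  have "[] \<notin> rev ` X" using assms by auto
  from existsE[OF this, of "rev y"] obtain ys u where
    h: "set ys \<subseteq> rev ` X" "rev y = concat ys @ u" "\<forall>p. prefix p u \<longrightarrow> p \<notin> rev ` X" by blast
  have "set (map rev (rev ys)) \<subseteq> X" using h(1) by auto
  moreover have "y = rev u @ concat (map rev (rev ys))"
    using arg_cong[OF h(2), of rev] by (simp add: rev_concat)
  moreover have "\<forall>s. suffix s (rev u) \<longrightarrow> s \<notin> X"
    using nosuf_rev[of "rev u" X] h(3) by simp
  ultimately show ?thesis by blast
qed

lemma delta_Qc:
  assumes sc: "suffix_code X"
  shows "delta X w = card (Qc X w)"
proof -
  have inj: "inj_on (snd \<circ> snd) (parses X w)"
  proof (rule inj_onI)
    fix a b assume a: "a \<in> parses X w" and b: "b \<in> parses X w" and f: "(snd \<circ> snd) a = (snd \<circ> snd) b"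
    obtain v x u where av: "a = (v, x, u)" by (cases a) auto
    obtain v' x' u' where bv: "b = (v', x', u')" by (cases b) auto
    have "u = u'" using f av bv by simp
    from a av obtain xs where xs: "x = concat xs" "set xs \<subseteq> X" and
      wa: "w = v @ x @ u" and ua: "\<forall>s. suffix s v \<longrightarrow> s \<notin> X"
      by (auto simp: parses_def star_set_def)
    from b bv obtain xs' where xs': "x' = concat xs'" "set xs' \<subseteq> X" and
      wb: "w = v' @ x' @ u'" and ub: "\<forall>s. suffix s v' \<longrightarrow> s \<notin> X"
      by (auto simp: parses_def star_set_def)
    have e: "v @ x = v' @ x'" using wa wb \<open>u = u'\<close> by simp
    have "x = x'" using uniqU'[OF sc xs(2) xs'(2)] e xs xs' ua ub by simp
    then show "a = b" using e av bv \<open>u = u'\<close> by simp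
  qed
  have img: "(snd \<circ> snd) ` parses X w = Qc X w"
  proof
    show "(snd \<circ> snd) ` parses X w \<subseteq> Qc X w"
      by (auto simp: parses_def Qc_def suffix_def)
  next
    show "Qc X w \<subseteq> (snd \<circ> snd) ` parses X w"
    proof
      fix u assume "u \<in> Qc X w"
      then have u: "suffix u w" "\<forall>p. prefix p u \<longrightarrow> p \<notin> X" by (auto simp: Qc_def)
      then obtain y where y: "w = y @ u" by (auto simp: suffix_def)
      have "[] \<notin> X" using sc by (simp add: suffix_code_def)
      from existsE'[OF this, of y] obtain xs v where
        "set xs \<subseteq> X" "y = v @ concat xs" "\<forall>s. suffix s v \<longrightarrow> s \<notin> X" by blast
      then have "(v, concat xs, u) \<in> parses X w"
        using y u by (auto simp: parses_def star_set_def)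
      then show "u \<in> (snd \<circ> snd) ` parses X w" by force
    qed
  qed
  show ?thesis unfolding delta_def using card_image[OF inj] img by simp
qed

lemma mono_right: "prefix_code X \<Longrightarrow> delta X w \<le> delta X (w @ t)"
  unfolding delta_Pc
  by (rule card_mono[OF finite_Pc]) (auto simp: Pc_def intro: prefix_order.trans)

lemma mono_left: "suffix_code X \<Longrightarrow> delta X w \<le> delta X (t @ w)"
  unfolding delta_Qc
  by (rule card_mono[OF finite_Qc]) (auto simp: Qc_def suffix_def)


lemma Pc_snoc: "Pc X (w @ [a]) = Pc X w \<union> (if (\<forall>s. suffix s (w @ [a]) \<longrightarrow> s \<notin> X) then {w @ [a]} else {})"
  by (auto simp: Pc_def)

lemma delta_snoc:
  assumes "prefix_code X"
  shows "delta X (w @ [a]) \<le> delta X w + 1"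
    and "delta X w < delta X (w @ [a]) \<Longrightarrow> (\<forall>s. suffix s (w @ [a]) \<longrightarrow> s \<notin> X)"
proof -
  show "delta X (w @ [a]) \<le> delta X w + 1"
    unfolding delta_Pc[OF assms] Pc_snoc
    using card_Un_le[of "Pc X w" "if (\<forall>s. suffix s (w @ [a]) \<longrightarrow> s \<notin> X) then {w @ [a]} else {}"]
    by (auto split: if_splits)
  show "delta X w < delta X (w @ [a]) \<Longrightarrow> (\<forall>s. suffix s (w @ [a]) \<longrightarrow> s \<notin> X)"
    unfolding delta_Pc[OF assms] Pc_snoc by (auto split: if_splits)
qed

lemma delta_Nil: "prefix_code X \<Longrightarrow> delta X [] = 1"
proof -
  assume pc: "prefix_code X"
  have "Pc X [] = {[]}" using pc by (auto simp: Pc_def prefix_code_def)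
  then show ?thesis unfolding delta_Pc[OF pc] by simp
qed

lemma ivt:
  assumes pc: "prefix_code X"
  shows "1 \<le> k \<Longrightarrow> k \<le> delta X w \<Longrightarrow> \<exists>p. prefix p w \<and> delta X p = k \<and>
     (2 \<le> k \<longrightarrow> p \<noteq> [] \<and> (\<forall>s. suffix s p \<longrightarrow> s \<notin> X))"
proof (induction w rule: rev_induct)
  case Nil
  then show ?case using delta_Nil[OF pc] by (intro exI[of _ "[]"]) auto
next
  case (snoc a w)
  show ?case
  proof (cases "k \<le> delta X w")
    case True
    then obtain p where "prefix p w \<and> delta X p = k \<and>
     (2 \<le> k \<longrightarrow> p \<noteq> [] \<and> (\<forall>s. suffix s p \<longrightarrow> s \<notin> X))" using snoc by blast
    then show ?thesis by (intro exI[of _ p]) auto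
  next
    case False
    then have "delta X w < delta X (w @ [a])" "k = delta X (w @ [a])"
      using snoc.prems delta_snoc(1)[OF pc, of w a] by auto
    then show ?thesis using delta_snoc(2)[OF pc] by (intro exI[of _ "w @ [a]"]) auto
  qed
qed


lemma key:
  assumes rec: "recurrent F" and pc: "prefix_code X" and deg: "has_F_degree F X d"
    and p: "p \<in> F" "p \<noteq> []"
  shows "\<exists>x\<in>X. suffix x p \<or> suffix p x"
proof -
  obtain w0 where w0: "w0 \<in> F" "delta X w0 = d" using deg by (auto simp: has_F_degree_def)
  obtain v where v: "w0 @ v @ p \<in> F" using rec w0 p unfolding recurrent_def by blast
  define z where "z = w0 @ v @ p"
  have le: "delta X z \<le> d" using deg v by (auto simp: has_F_degree_def z_def)
  have sub: "Pc X w0 \<subseteq> Pc X z" by (auto simp: Pc_def z_def intro: prefix_order.trans)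
  have "card (Pc X z) \<le> card (Pc X w0)" using le w0 by (simp add: delta_Pc[OF pc])
  then have eq: "Pc X w0 = Pc X z" using card_seteq[OF finite_Pc sub] by simp
  have "\<not> (\<forall>s. suffix s z \<longrightarrow> s \<notin> X)"
  proof
    assume "\<forall>s. suffix s z \<longrightarrow> s \<notin> X"
    then have "z \<in> Pc X z" by (simp add: Pc_def)
    then have "z \<in> Pc X w0" using eq by simp
    then have "prefix z w0" by (simp add: Pc_def)
    then have "length z \<le> length w0" by (rule prefix_length_le)
    then show False using p by (simp add: z_def)
  qed
  then obtain s where s: "suffix s z" "s \<in> X" by blast
  have "suffix p z" unfolding suffix_def z_def by (metis append_assoc)
  then have "suffix s p \<or> suffix p s" using s suffix_same_cases by blast
  then show ?thesis using s by blast
qed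


theorem mainTheorem5:
  fixes A :: "'a set" and F X :: "'a list set" and d :: nat
  assumes "finite A" and "F \<subseteq> lists A" and "recurrent F"
    and "X \<subseteq> F" and "bifix_code X" and "has_F_degree F X d"
  shows "\<exists>P :: nat \<Rightarrow> 'a list set.
           (\<forall>i < d - 1. F_maximal_prefix_code F (P i))
         \<and> (\<forall>i < d - 1. \<forall>j < d - 1. i \<noteq> j \<longrightarrow> P i \<inter> P j = {})
         \<and> (\<Union>i < d - 1. P i) = {s. s \<noteq> [] \<and> (\<exists>x\<in>X. strict_suffix s x)}"
proof -
  have rec: "recurrent F" and XF: "X \<subseteq> F" and deg: "has_F_degree F X d" using assms by auto
  have pc: "prefix_code X" and sc: "suffix_code X" using assms(5) by (auto simp: bifix_code_def)
  have fac: "factorial_set F" using rec by (simp add: recurrent_def)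
  define S where "S = {s. s \<noteq> [] \<and> (\<exists>x\<in>X. strict_suffix s x)}"
  define P where "P = (\<lambda>i::nat. {s \<in> S. delta X s = i + 2})"
  have SF: "S \<subseteq> F"
  proof
    fix s assume "s \<in> S"
    then obtain x where "x \<in> X" "strict_suffix s x" by (auto simp: S_def)
    then show "s \<in> F" using XF fac unfolding factorial_set_def
      by (meson in_mono suffix_order.less_imp_le suffix_imp_sublist)
  qed
  have Snosuf: "\<forall>t. suffix t s \<longrightarrow> t \<notin> X" if sS: "s \<in> S" for s
  proof (intro allI impI notI)
    fix t assume t: "suffix t s" "t \<in> X"
    obtain x where "x \<in> X" "strict_suffix s x" using sS unfolding S_def by blast
    then have "strict_suffix t x" using t(1) by (meson suffix_order.le_less_trans)
    then show False using sc t(2) \<open>x \<in> X\<close> by (auto simp: suffix_code_def)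
  qed
  have Sdelta: "2 \<le> delta X s \<and> delta X s \<le> d" if "s \<in> S" for s
  proof
    have "{[], s} \<subseteq> Pc X s" using Snosuf[OF that] sc
      by (auto simp: Pc_def suffix_code_def)
    moreover have "s \<noteq> []" using that by (simp add: S_def)
    ultimately have "card {[], s} \<le> card (Pc X s)" using finite_Pc card_mono by blast
    then show "2 \<le> delta X s" using \<open>s \<noteq> []\<close> delta_Pc[OF pc] by simp
    show "delta X s \<le> d" using deg SF that by (auto simp: has_F_degree_def)
  qed
  have Smono: "delta X s < delta X s'" if "s \<in> S" "s' \<in> S" "strict_prefix s s'" for s s'
  proof -
    have "Pc X s \<subseteq> Pc X s'" using that(3) by (auto simp: Pc_def intro: prefix_order.trans)
    moreover have "s' \<in> Pc X s'" using Snosuf[OF that(2)] by (simp add: Pc_def)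
    moreover have "s' \<notin> Pc X s" using that(3) by (auto simp: Pc_def)
    ultimately have "Pc X s \<subset> Pc X s'" by blast
    then show ?thesis using psubset_card_mono[OF finite_Pc] delta_Pc[OF pc] by simp
  qed
  have Ppc: "prefix_code (P i)" for i
    unfolding prefix_code_def P_def
  proof (intro conjI ballI)
    show "[] \<notin> {s \<in> S. delta X s = i + 2}" by (simp add: S_def)
    fix x y assume "x \<in> {s \<in> S. delta X s = i + 2}" "y \<in> {s \<in> S. delta X s = i + 2}"
    then show "\<not> strict_prefix x y" using Smono by fastforce
  qed
  have Pmax: "F_maximal_prefix_code F (P i)" if i: "i < d - 1" for i
    unfolding F_maximal_prefix_code_def
  proof (intro conjI notI)
    show "prefix_code (P i)" by (rule Ppc)
    show "P i \<subseteq> F" using SF by (auto simp: P_def)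
    assume "\<exists>Z. prefix_code Z \<and> Z \<subseteq> F \<and> P i \<subset> Z"
    then obtain Z where Z: "prefix_code Z" "Z \<subseteq> F" "P i \<subset> Z" by blast
    then obtain w where w: "w \<in> Z" "w \<notin> P i" by blast
    have "w \<in> F" "w \<noteq> []" using w Z by (auto simp: prefix_code_def)
    obtain w0 where w0: "w0 \<in> F" "delta X w0 = d" using deg by (auto simp: has_F_degree_def)
    obtain v where v: "w @ v @ w0 \<in> F" using rec w0 \<open>w \<in> F\<close> unfolding recurrent_def by blast
    define w' where "w' = w @ v @ w0"
    have "delta X w0 \<le> delta X ((w @ v) @ w0)" by (rule mono_left[OF sc])
    moreover have "delta X w' \<le> d" using deg v by (auto simp: has_F_degree_def w'_def)
    ultimately have dw': "delta X w' = d" using w0 by (simp add: w'_def)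
    obtain p where p: "prefix p w'" "delta X p = i + 2" "p \<noteq> []" "\<forall>s. suffix s p \<longrightarrow> s \<notin> X"
    proof -
      have "i + 2 \<le> delta X w'" using dw' i by simp
      then show ?thesis using ivt[OF pc, of "i + 2" w'] that by auto
    qed
    have "p \<in> F" using p(1) v fac unfolding factorial_set_def w'_def by blast
    from key[OF rec pc deg this p(3)] obtain x where x: "x \<in> X" "suffix x p \<or> suffix p x" by blast
    have "\<not> suffix x p" using p(4) x(1) by blast
    then have "suffix p x" using x by blast
    moreover have "p \<noteq> x" using p(4) x(1) by blast
    ultimately have "strict_suffix p x" by (simp add: suffix_order.less_le)
    then have "p \<in> P i" using x(1) p by (auto simp: P_def S_def)
    then have "p \<in> Z" using Z by blast
    have "prefix w w'" by (simp add: w'_def)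
    then have "prefix w p \<or> prefix p w" using p(1) prefix_same_cases by blast
    moreover have "w \<noteq> p" using w \<open>p \<in> P i\<close> by blast
    ultimately have "strict_prefix w p \<or> strict_prefix p w" by (auto simp: prefix_order.less_le)
    then show False using Z(1) w(1) \<open>p \<in> Z\<close> by (auto simp: prefix_code_def)
  qed
  have disj: "P i \<inter> P j = {}" if "i \<noteq> j" for i j
    using that by (auto simp: P_def)
  have un: "(\<Union>i < d - 1. P i) = S"
  proof
    show "(\<Union>i < d - 1. P i) \<subseteq> S" by (auto simp: P_def)
    show "S \<subseteq> (\<Union>i < d - 1. P i)"
    proof
      fix s assume s: "s \<in> S"
      have "delta X s - 2 < d - 1" "s \<in> P (delta X s - 2)" using Sdelta[OF s] s by (auto simp: P_def)
      then show "s \<in> (\<Union>i < d - 1. P i)" by blast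
    qed
  qed
  show ?thesis using Pmax disj un unfolding S_def by blast
qed

end
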